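(* Let $\delta\in(0,1)$, let $H$ be an $n$-vertex graph, let $C$ be a set of colours with $|C|\ge7\delta n$, and for every vertex $w$ let $C_w\subseteq C$, such that: (i) $d_H(w)\le|C|-|C_w|$ for every $w\in V(H)$; (ii) there is a set $U\subseteq V(H)$ with $|U|\le\delta n$ such that every edge of $H$ has an endpoint in $U$; (iii) $|C_w|\le\delta n$ for every $w\in V(H)$; (iv) for every $c\in C$, $|\{w\in V(H): c\in C_w\}|\le\delta n$. Then there is a proper edge-colouring $\phi:E(H)\to C$ such that every edge $uv\in E(H)$ satisfies $\phi(uv)\notin C_u\cup C_v$.
   Context: A proper edge-colouring of a graph assigns colours to edges so that edges sharing an endpoint receive different colours; $d_H(w)$ is the degree of $w$ in $H$. *)

theory Defs
  imports Complex_Main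
begin

definition simple_graph :: "'a set \<Rightarrow> 'a set set \<Rightarrow> bool" where
  "simple_graph V E \<longleftrightarrow> finite V \<and> (\<forall>e\<in>E. e \<subseteq> V \<and> card e = 2)"

definition degree :: "'a set set \<Rightarrow> 'a \<Rightarrow> nat" where
  "degree E w = card {e\<in>E. w \<in> e}"

definition proper_edge_colouring :: "'a set set \<Rightarrow> 'c set \<Rightarrow> ('a set \<Rightarrow> 'c) \<Rightarrow> bool" where
  "proper_edge_colouring E C phi \<longleftrightarrow>
     (\<forall>e\<in>E. phi e \<in> C) \<and>
     (\<forall>e\<in>E. \<forall>f\<in>E. e \<noteq> f \<and> e \<inter> f \<noteq> {} \<longrightarrow> phi e \<noteq> phi f)"

end

theory Submission imports Defs begin

definition valid :: "'c set \<Rightarrow> ('a \<Rightarrow> 'c set) \<Rightarrow> 'a set set \<Rightarrow> ('a set \<Rightarrow> 'c) \<Rightarrow> bool" where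
  "valid C Cw S phi \<longleftrightarrow> (\<forall>e\<in>S. phi e \<in> C \<and> (\<forall>x\<in>e. phi e \<notin> Cw x)) \<and>
     (\<forall>e\<in>S. \<forall>f\<in>S. e \<noteq> f \<and> e \<inter> f \<noteq> {} \<longrightarrow> phi e \<noteq> phi f)"

lemma pair_other: "card g = 2 \<Longrightarrow> w \<in> g \<Longrightarrow> \<exists>y. y \<noteq> w \<and> g = {w,y}"
  by (auto simp: card_2_iff)

lemma card_star:
  assumes "finite U" "\<forall>g\<in>S. card g = 2 \<and> x \<in> g \<and> g - {x} \<subseteq> U"
  shows "card S \<le> card U"
proof -
  have "S \<subseteq> (\<lambda>y. {x,y}) ` U"
  proof
    fix g assume "g \<in> S"
    then obtain y where "y \<noteq> x" "g = {x,y}" using assms(2) pair_other by metis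
    moreover have "y \<in> U" using assms(2) \<open>g \<in> S\<close> calculation by auto
    ultimately show "g \<in> (\<lambda>y. {x,y}) ` U" by blast
  qed
  hence "card S \<le> card ((\<lambda>y. {x,y}) ` U)" using assms(1) by (intro card_mono) auto
  also have "\<dots> \<le> card U" by (rule card_image_le[OF assms(1)])
  finally show ?thesis .
qed

lemma card_cover: "finite B \<Longrightarrow> finite D \<Longrightarrow> A \<subseteq> B \<union> D \<Longrightarrow> card A \<le> card B + card D"
  by (meson card_Un_le card_mono finite_UnI order_trans)

lemma valid_insert:
  assumes "valid C Cw S phi" "e \<notin> S" "c \<in> C" "\<forall>x\<in>e. c \<notin> Cw x"
    "\<forall>g\<in>S. g \<inter> e \<noteq> {} \<longrightarrow> phi g \<noteq> c"
  shows "valid C Cw (insert e S) (phi(e:=c))"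
  using assms unfolding valid_def by (auto simp: Int_commute)

lemma valid_recolour:
  assumes "valid C Cw S phi" "f \<in> S" "c \<in> C" "\<forall>x\<in>f. c \<notin> Cw x"
    "\<forall>g\<in>S. g \<noteq> f \<and> g \<inter> f \<noteq> {} \<longrightarrow> phi g \<noteq> c"
  shows "valid C Cw S (phi(f:=c))"
  using assms unfolding valid_def by (auto simp: Int_commute)

theorem lemma9:
  fixes V :: "'a set" and E :: "'a set set" and C :: "'c set"
    and Cw :: "'a \<Rightarrow> 'c set" and \<delta> :: real and n :: nat
  assumes graph: "simple_graph V E"
    and n_def: "card V = n"
    and delta: "0 < \<delta>" "\<delta> < 1"
    and finC: "finite C"
    and sizeC: "real (card C) \<ge> 7 * \<delta> * real n"
    and subC: "\<forall>w\<in>V. Cw w \<subseteq> C"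
    and i: "\<forall>w\<in>V. degree E w \<le> card C - card (Cw w)"
    and ii: "\<exists>U\<subseteq>V. real (card U) \<le> \<delta> * real n \<and> (\<forall>e\<in>E. e \<inter> U \<noteq> {})"
    and iii: "\<forall>w\<in>V. real (card (Cw w)) \<le> \<delta> * real n"
    and iv: "\<forall>c\<in>C. real (card {w\<in>V. c \<in> Cw w}) \<le> \<delta> * real n"
  shows "\<exists>phi. proper_edge_colouring E C phi \<and>
           (\<forall>u\<in>V. \<forall>v\<in>V. {u, v} \<in> E \<longrightarrow> phi {u, v} \<notin> Cw u \<union> Cw v)"
proof -
  define D where "D = \<delta> * real n"
  obtain U where U: "U \<subseteq> V" "real (card U) \<le> D" "\<forall>e\<in>E. e \<inter> U \<noteq> {}"
    using ii D_def by blast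
  have sizeC': "real (card C) \<ge> 7 * D" using sizeC D_def by simp
  have iii': "\<forall>w\<in>V. real (card (Cw w)) \<le> D" using iii D_def by simp
  have iv': "\<forall>c\<in>C. real (card {w\<in>V. c \<in> Cw w}) \<le> D" using iv D_def by simp
  have finV: "finite V" and Esub: "\<forall>e\<in>E. e \<subseteq> V \<and> card e = 2"
    using graph by (auto simp: simple_graph_def)
  have finE: "finite E"
  proof -
    have "E \<subseteq> Pow V" using Esub by auto
    thus ?thesis using finV by (meson finite_Pow_iff finite_subset)
  qed
  have finU: "finite U" using U(1) finV finite_subset by blast
  have finCw: "\<forall>w\<in>V. finite (Cw w)" using subC finC finite_subset by blast
  have degCw: "\<forall>w\<in>V. degree E w + card (Cw w) \<le> card C"
  proof
    fix w assume "w \<in> V"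
    hence "card (Cw w) \<le> card C" using subC finC by (simp add: card_mono)
    thus "degree E w + card (Cw w) \<le> card C" using i \<open>w \<in> V\<close> by auto
  qed
  define E1 where "E1 = {e\<in>E. e \<subseteq> U}"
  have step1: "\<exists>phi'. valid C Cw (insert e F) phi'"
    if F: "F \<subseteq> E1" "valid C Cw F phi" and e: "e \<in> E1" "e \<notin> F" for F phi e
  proof -
    have "F \<subseteq> E" using F(1) E1_def by auto
    hence finF: "finite F" using finE by (rule finite_subset)
    have eE: "e \<in> E" "e \<subseteq> U" using e E1_def by auto
    hence "card e = 2" using Esub by auto
    then obtain u v where uv: "e = {u,v}" "u \<noteq> v" unfolding card_2_iff by blast
    have uU: "u \<in> U" "v \<in> U" using uv eE by auto
    have cU1: "1 \<le> card U" using uU finU by (metis Suc_leI card_gt_0_iff empty_iff One_nat_def)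
    have uV: "u \<in> V" "v \<in> V" using uU U(1) by auto
    have bnd: "card {g\<in>F. x \<in> g} \<le> card U" if "x \<in> U" for x
      using finU apply (rule card_star)
      using F(1) E1_def Esub by auto
    define Fb where "Fb = Cw u \<union> Cw v \<union> phi ` {g\<in>F. u\<in>g} \<union> phi ` {g\<in>F. v\<in>g}"
    have finFb: "finite Fb" unfolding Fb_def using finF finCw uV by auto
    have a1: "card Fb \<le> card (Cw u \<union> Cw v \<union> phi ` {g\<in>F. u\<in>g}) + card (phi ` {g\<in>F. v\<in>g})"
      unfolding Fb_def by (rule card_Un_le)
    have a2: "card (Cw u \<union> Cw v \<union> phi ` {g\<in>F. u\<in>g}) \<le> card (Cw u \<union> Cw v) + card (phi ` {g\<in>F. u\<in>g})"
      by (rule card_Un_le)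
    have a3: "card (Cw u \<union> Cw v) \<le> card (Cw u) + card (Cw v)" by (rule card_Un_le)
    have a4: "card (phi ` {g\<in>F. x\<in>g}) \<le> card U" if "x \<in> U" for x
      using card_image_le[of "{g\<in>F. x\<in>g}" phi] finF bnd[OF that] by simp
    have N: "card Fb \<le> card (Cw u) + card (Cw v) + 2 * card U"
      using a1 a2 a3 a4[OF uU(1)] a4[OF uU(2)] by linarith
    have R: "real (card Fb) \<le> real (card (Cw u)) + real (card (Cw v)) + 2 * real (card U)"
      using N by (metis of_nat_add of_nat_le_iff of_nat_mult of_nat_numeral)
    have "real (card (Cw u)) \<le> D" "real (card (Cw v)) \<le> D" using iii' uV by auto
    moreover have "1 \<le> real (card U)" using cU1 by simp
    ultimately have lt: "real (card Fb) < real (card C)" using R U(2) sizeC' by linarith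
    have "\<not> C \<subseteq> Fb"
    proof
      assume "C \<subseteq> Fb"
      hence "card C \<le> card Fb" using finFb by (rule card_mono[rotated])
      thus False using lt by simp
    qed
    then obtain c where c: "c \<in> C" "c \<notin> Fb" by blast
    show ?thesis
    proof (rule exI, rule valid_insert[OF F(2) e(2) c(1)])
      show "\<forall>x\<in>e. c \<notin> Cw x" using c uv Fb_def by auto
      show "\<forall>g\<in>F. g \<inter> e \<noteq> {} \<longrightarrow> phi g \<noteq> c" using c uv Fb_def by auto
    qed
  qed
  have step2: "\<exists>phi'. valid C Cw (insert e G) phi'"
    if G: "E1 \<subseteq> G" "G \<subseteq> E" "valid C Cw G phi" and e: "e \<in> E" "e \<notin> E1" "e \<notin> G" for G phi e
  proof -
    have GE: "G \<subseteq> E" by (rule G(2))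
    have finG: "finite G" using finE GE by (rule finite_subset[rotated])
    have ecard: "card e = 2" "e \<subseteq> V" using Esub e(1) by auto
    have eU: "e \<inter> U \<noteq> {}" using U(3) e(1) by auto
    have enU: "\<not> e \<subseteq> U" using e(1,2) E1_def by auto
    obtain u where u: "u \<in> e" "u \<in> U" using eU by blast
    obtain w where w: "w \<noteq> u" "e = {u,w}" using pair_other[OF ecard(1) u(1)] by blast
    have wU: "w \<notin> U" using w enU u by auto
    have uV: "u \<in> V" "w \<in> V" using ecard w by auto
    have cU1: "1 \<le> card U" using u(2) finU by (metis Suc_leI card_gt_0_iff empty_iff One_nat_def)
    have Gcard: "\<forall>g\<in>G. card g = 2 \<and> g \<subseteq> V \<and> g \<inter> U \<noteq> {}" using GE Esub U(3) by blast
    have gpair: "\<exists>y. y \<noteq> x \<and> g = {x,y}" if "g \<in> G" "x \<in> g" for g x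
    proof -
      have "card g = 2" using Gcard that(1) by blast
      from pair_other[OF this that(2)] show ?thesis .
    qed
    define Gu where "Gu = {g\<in>G. u\<in>g}"
    define Gw where "Gw = {g\<in>G. w\<in>g}"
    have finGu: "finite Gu" "finite Gw" using finG Gu_def Gw_def by auto
    have nonU: "g - {x} \<subseteq> U" if gx: "g \<in> G" "x \<in> g" "x \<notin> U" for g x
    proof -
      obtain y where "y \<noteq> x" "g = {x,y}" using gpair[OF gx(1,2)] by blast
      moreover have "g \<inter> U \<noteq> {}" using Gcard gx by blast
      ultimately show ?thesis using gx by auto
    qed
    have cGw: "card Gw \<le> card U"
      using finU apply (rule card_star)
      using Gw_def Gcard nonU wU by auto
    have cGu: "card Gu + 1 \<le> degree E u"
    proof -
      have "Gu \<subseteq> {g\<in>E. u\<in>g} - {e}" using Gu_def GE e(3) by auto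
      hence "card Gu \<le> card ({g\<in>E. u\<in>g} - {e})" using finE by (intro card_mono) auto
      also have "\<dots> = card {g\<in>E. u\<in>g} - 1" using e(1) u(1) by (simp add: card_Diff_singleton)
      finally have "card Gu \<le> card {g\<in>E. u\<in>g} - 1" .
      moreover have "card {g\<in>E. u\<in>g} > 0" using e(1) u(1) finE by (auto simp: card_gt_0_iff)
      ultimately show ?thesis unfolding degree_def by linarith
    qed
    have finCu: "finite (Cw u)" "finite (Cw w)" using finCw uV by auto
    show ?thesis
    proof (cases "\<exists>c\<in>C. c \<notin> Cw u \<union> Cw w \<union> phi ` Gu \<union> phi ` Gw")
      case True
      then obtain c where c: "c \<in> C" "c \<notin> Cw u \<union> Cw w \<union> phi ` Gu \<union> phi ` Gw" by blast
      show ?thesis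
      proof (rule exI, rule valid_insert[OF G(3) e(3) c(1)])
        show "\<forall>x\<in>e. c \<notin> Cw x" using c w by auto
        show "\<forall>g\<in>G. g \<inter> e \<noteq> {} \<longrightarrow> phi g \<noteq> c" using c w Gu_def Gw_def by auto
      qed
    next
      case False
      hence allC: "\<forall>c\<in>C. c \<in> Cw u \<union> Cw w \<union> phi ` Gu \<union> phi ` Gw" by blast
      define R where "R = C - (Cw u \<union> phi ` Gu)"
      have "card C \<le> card R + card (Cw u \<union> phi ` Gu)"
        using finCu finGu finC by (intro card_cover) (auto simp: R_def)
      also have "card (Cw u \<union> phi ` Gu) \<le> card (Cw u) + card Gu"
        using card_Un_le[of "Cw u" "phi ` Gu"] card_image_le[OF finGu(1), of phi] by linarith
      finally have "card C \<le> card R + card (Cw u) + card Gu" by linarith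
      moreover have "degree E u + card (Cw u) \<le> card C" using degCw uV by blast
      ultimately have "card R \<ge> 1" using cGu by linarith
      hence "R \<noteq> {}" by auto
      then obtain r where r: "r \<in> C" "r \<notin> Cw u" "r \<notin> phi ` Gu" using R_def by blast
      define X where "X = Cw w \<union> phi ` Gw"
      define GuW where "GuW = {g\<in>Gu. \<not> g \<subseteq> U}"
      define GuU where "GuU = {g\<in>Gu. g \<subseteq> U}"
      have finX: "finite X" using X_def finCu finGu by auto
      have finGuW: "finite GuW" "finite GuU" using finGu GuW_def GuU_def by auto
      have cGuU: "card GuU \<le> card U"
        using finU apply (rule card_star)
        using GuU_def Gu_def Gcard by auto
      have cX: "card X \<le> card (Cw w) + card Gw"
        using card_Un_le[of "Cw w" "phi ` Gw"] card_image_le[OF finGu(2), of phi] unfolding X_def by linarith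
      have cover: "C \<subseteq> (Cw u \<union> X) \<union> ((phi ` GuW - X) \<union> phi ` GuU)"
      proof
        fix c assume "c \<in> C"
        hence c: "c \<in> Cw u \<union> Cw w \<union> phi ` Gu \<union> phi ` Gw" using allC by blast
        have "Gu = GuW \<union> GuU" unfolding GuW_def GuU_def by blast
        hence "phi ` Gu = phi ` GuW \<union> phi ` GuU" by (simp add: image_Un)
        thus "c \<in> (Cw u \<union> X) \<union> ((phi ` GuW - X) \<union> phi ` GuU)" using c unfolding X_def by blast
      qed
      have "card C \<le> card (Cw u \<union> X) + card ((phi ` GuW - X) \<union> phi ` GuU)"
        using finCu finX finGuW by (intro card_cover[OF _ _ cover]) auto
      also have "\<dots> \<le> (card (Cw u) + card X) + (card (phi ` GuW - X) + card GuU)"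
        using card_Un_le[of "Cw u" X] card_Un_le[of "phi ` GuW - X" "phi ` GuU"]
          card_image_le[OF finGuW(2), of phi] by linarith
      finally have N1: "card C \<le> card (Cw u) + card (Cw w) + card Gw + card (phi ` GuW - X) + card U"
        using cX cGuU by linarith
      define GoodE where "GoodE = {g\<in>GuW. phi g \<notin> X}"
      have finGood: "finite GoodE" using finGuW GoodE_def by auto
      have "phi ` GuW - X = phi ` GoodE" unfolding GoodE_def by auto
      hence cGood: "card (phi ` GuW - X) \<le> card GoodE" using card_image_le[OF finGood] by simp
      define Bad1 where "Bad1 = {g\<in>GuW. \<exists>y\<in>g. y \<notin> U \<and> r \<in> Cw y}"
      define Bad2 where "Bad2 = {g\<in>GuW. \<exists>y\<in>g. y \<notin> U \<and> r \<in> phi ` {h\<in>G. y\<in>h}}"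
      have gform: "g = {u,y}" if "g \<in> GuW" "y \<in> g" "y \<notin> U" for g y
      proof -
        have "g \<in> G" "u \<in> g" using that GuW_def Gu_def by auto
        then obtain z where "z \<noteq> u" "g = {u,z}" using gpair by blast
        thus ?thesis using that u(2) by auto
      qed
      have cB1: "card Bad1 \<le> card {y\<in>V. r \<in> Cw y}"
      proof -
        have "Bad1 \<subseteq> (\<lambda>y. {u,y}) ` {y\<in>V. r \<in> Cw y}"
        proof
          fix g assume g: "g \<in> Bad1"
          then obtain y where y: "y \<in> g" "y \<notin> U" "r \<in> Cw y" "g \<in> GuW" using Bad1_def by blast
          have "g \<in> G" using y(4) GuW_def Gu_def by auto
          hence "y \<in> V" using Gcard y(1) by blast
          thus "g \<in> (\<lambda>y. {u,y}) ` {y\<in>V. r \<in> Cw y}" using gform[OF y(4,1,2)] y(3) by blast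
        qed
        moreover have "finite {y\<in>V. r \<in> Cw y}" using finV by auto
        ultimately have "card Bad1 \<le> card ((\<lambda>y. {u,y}) ` {y\<in>V. r \<in> Cw y})" by (intro card_mono) auto
        also have "\<dots> \<le> card {y\<in>V. r \<in> Cw y}" using \<open>finite {y\<in>V. r \<in> Cw y}\<close> by (rule card_image_le)
        finally show ?thesis .
      qed
      define Gr where "Gr = {h\<in>G. phi h = r}"
      have finGr: "finite Gr" using finG Gr_def by auto
      have cGr: "card Gr \<le> card U"
      proof -
        define s where "s h = (SOME x. x \<in> h \<inter> U)" for h
        have sin: "s h \<in> h \<inter> U" if "h \<in> G" for h
        proof -
          have "\<exists>x. x \<in> h \<inter> U" using Gcard that by blast
          thus ?thesis unfolding s_def by (rule someI_ex)
        qed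
        have "inj_on s Gr"
        proof (rule inj_onI)
          fix h1 h2 assume h: "h1 \<in> Gr" "h2 \<in> Gr" "s h1 = s h2"
          have "h1 \<in> G" "h2 \<in> G" using h Gr_def by auto
          hence "s h1 \<in> h1 \<inter> h2" using sin[of h1] sin[of h2] h(3) by auto
          moreover have "phi h1 = phi h2" using h Gr_def by auto
          ultimately show "h1 = h2" using G(3) h Gr_def unfolding valid_def by blast
        qed
        moreover have "s ` Gr \<subseteq> U" using sin Gr_def by auto
        ultimately show ?thesis using finU card_inj_on_le by blast
      qed
      have cB2: "card Bad2 \<le> card Gr"
      proof -
        define t where "t h = {u, SOME y. y \<in> h \<and> y \<notin> U}" for h
        have "Bad2 \<subseteq> t ` Gr"
        proof
          fix g assume g: "g \<in> Bad2"
          then obtain y h where y: "y \<in> g" "y \<notin> U" "g \<in> GuW" "h \<in> G" "y \<in> h" "phi h = r"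
            using Bad2_def by blast
          obtain x where x: "x \<noteq> y" "h = {y,x}" using gpair[OF y(4,5)] by blast
          have "x \<in> U" using Gcard y(4) x y(2) by auto
          hence "(SOME z. z \<in> h \<and> z \<notin> U) = y" using x y(2,5)
            by (intro some_equality) auto
          hence "t h = g" using t_def gform[OF y(3,1,2)] by simp
          thus "g \<in> t ` Gr" using y(4,6) Gr_def by blast
        qed
        hence "card Bad2 \<le> card (t ` Gr)" using finGr by (intro card_mono) auto
        also have "\<dots> \<le> card Gr" using finGr by (rule card_image_le)
        finally show ?thesis .
      qed
      have rV: "real (card {y\<in>V. r \<in> Cw y}) \<le> D" using iv' r(1) by blast
      have "real (card (Cw u)) \<le> D" "real (card (Cw w)) \<le> D" using iii' uV by auto
      moreover have "real (card Gw) \<le> D" "real (card Gr) \<le> D" using cGw cGr U(2) by linarith+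
      moreover have "1 \<le> real (card U)" using cU1 by simp
      moreover have "real (card C) \<le> real (card (Cw u)) + real (card (Cw w)) + real (card Gw)
          + real (card GoodE) + real (card U)"
        using N1 cGood by linarith
      moreover have "real (card Bad1) \<le> real (card {y\<in>V. r \<in> Cw y})" "real (card Bad2) \<le> real (card Gr)"
        using cB1 cB2 by auto
      ultimately have "real (card Bad1 + card Bad2) < real (card GoodE)"
        using sizeC' U(2) rV by simp
      hence lt: "card Bad1 + card Bad2 < card GoodE" by linarith
      have "\<not> GoodE \<subseteq> Bad1 \<union> Bad2"
      proof
        assume "GoodE \<subseteq> Bad1 \<union> Bad2"
        moreover have "finite Bad1" "finite Bad2" using finGuW Bad1_def Bad2_def by auto
        ultimately have "card GoodE \<le> card Bad1 + card Bad2" by (rule card_cover[rotated 2])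
        thus False using lt by simp
      qed
      then obtain f where f: "f \<in> GoodE" "f \<notin> Bad1" "f \<notin> Bad2" by blast
      have fG: "f \<in> G" "u \<in> f" "\<not> f \<subseteq> U" "phi f \<notin> X"
        using f(1) GoodE_def GuW_def Gu_def by auto
      obtain w' where w': "w' \<noteq> u" "f = {u,w'}" using gpair[OF fG(1,2)] by blast
      have w'U: "w' \<notin> U" using fG(3) w' u(2) by auto
      have rw': "r \<notin> Cw w'" "r \<notin> phi ` {h\<in>G. w'\<in>h}"
        using f(1,2,3) w' w'U GoodE_def Bad1_def Bad2_def by auto
      have phiv: "\<forall>g\<in>G. phi g \<in> C \<and> (\<forall>x\<in>g. phi g \<notin> Cw x)"
        "\<forall>g1\<in>G. \<forall>g2\<in>G. g1 \<noteq> g2 \<and> g1 \<inter> g2 \<noteq> {} \<longrightarrow> phi g1 \<noteq> phi g2"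
        using G(3) unfolding valid_def by auto
      define phi1 where "phi1 = phi(f := r)"
      have v1: "valid C Cw G phi1" unfolding phi1_def
      proof (rule valid_recolour[OF G(3) fG(1) r(1)])
        show "\<forall>x\<in>f. r \<notin> Cw x" using w' r(2) rw'(1) by auto
        show "\<forall>g\<in>G. g \<noteq> f \<and> g \<inter> f \<noteq> {} \<longrightarrow> phi g \<noteq> r"
        proof (intro ballI impI)
          fix g assume g: "g \<in> G" "g \<noteq> f \<and> g \<inter> f \<noteq> {}"
          hence "u \<in> g \<or> w' \<in> g" using w' by auto
          thus "phi g \<noteq> r" using g(1) r(3) rw'(2) Gu_def by auto
        qed
      qed
      have pfu: "phi f \<in> phi ` Gu" using fG Gu_def by auto
      have "valid C Cw (insert e G) (phi1(e := phi f))"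
      proof (rule valid_insert[OF v1 e(3)])
        show "phi f \<in> C" using phiv fG(1) by auto
        show "\<forall>x\<in>e. phi f \<notin> Cw x" using phiv fG(1,2,4) w X_def by auto
        show "\<forall>g\<in>G. g \<inter> e \<noteq> {} \<longrightarrow> phi1 g \<noteq> phi f"
        proof (intro ballI impI)
          fix g assume g: "g \<in> G" "g \<inter> e \<noteq> {}"
          show "phi1 g \<noteq> phi f"
          proof (cases "g = f")
            case True
            thus ?thesis using phi1_def pfu r(3) by auto
          next
            case False
            hence p1: "phi1 g = phi g" using phi1_def by simp
            have "u \<in> g \<or> w \<in> g" using g(2) w by auto
            moreover have "u \<in> g \<Longrightarrow> phi g \<noteq> phi f" using phiv(2) g(1) fG(1,2) False by blast
            moreover have "phi g \<noteq> phi f" if "w \<in> g"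
            proof -
              have "g \<in> Gw" using that g(1) Gw_def by auto
              hence "phi g \<in> X" unfolding X_def by blast
              thus ?thesis using fG(4) by auto
            qed
            ultimately show ?thesis using p1 by auto
          qed
        qed
      qed
      thus ?thesis by blast
    qed
  qed
  have c1': "\<exists>phi. valid C Cw F phi" if "finite F" "F \<subseteq> E1" for F
    using that
  proof (induction F rule: finite_subset_induct')
    case empty
    show ?case by (simp add: valid_def)
  next
    case (insert a F)
    thus ?case using step1 by blast
  qed
  have c1: "\<exists>phi. valid C Cw E1 phi" using c1'[of E1] finE E1_def by auto
  have c2: "\<exists>phi. valid C Cw (E1 \<union> F) phi" if "finite F" "F \<subseteq> E - E1" for F
    using that
  proof (induction F rule: finite_subset_induct')
    case empty
    show ?case using c1 by simp
  next
    case (insert a F)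
    then obtain phi where "valid C Cw (E1 \<union> F) phi" by blast
    moreover have "E1 \<subseteq> E1 \<union> F" "E1 \<union> F \<subseteq> E" using insert E1_def by auto
    ultimately have "\<exists>phi'. valid C Cw (insert a (E1 \<union> F)) phi'"
      using step2 insert by blast
    thus ?case by simp
  qed
  have EE: "E1 \<union> (E - E1) = E" using E1_def by blast
  have finD: "finite (E - E1)" using finE by blast
  have "E - E1 \<subseteq> E - E1" by (rule subset_refl)
  from c2[OF finD this] obtain phi where phi0: "valid C Cw (E1 \<union> (E - E1)) phi" by blast
  have phi: "valid C Cw E phi" using phi0 unfolding EE .
  show ?thesis
  proof (intro exI conjI)
    show "proper_edge_colouring E C phi" using phi by (auto simp: valid_def proper_edge_colouring_def)
    show "\<forall>u\<in>V. \<forall>v\<in>V. {u, v} \<in> E \<longrightarrow> phi {u, v} \<notin> Cw u \<union> Cw v"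
      using phi by (auto simp: valid_def)
  qed
qed

end
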